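(* Let $\mathcal{L}$ be a lineage with hierarchical generator $\mathcal{H}$. Then (i) for every $\psi\in\mathcal{L}$, $\psi\in\operatorname{span}(\mathcal{H}\cap\mathrm{desc}(\psi))$, where $\mathrm{desc}(\psi)=\bigcup_{k\ge1}\mathrm{ch}^k(\psi)$; (ii) for every $\ell\in\mathbb{Z}_{\ge0}$ and $k\in\mathbb{Z}^+$, $\mathcal{H}^{\ell+k}\subset\mathrm{ch}^k(\mathcal{L}^\ell)$.
   Context: Fix integers $d\ge1$, $n\ge2$, $m\ge2$; $s=n-1$, $p=m-1$. B-splines $\varphi^\ell_{\vec i}(\vec x)=\prod_kQ(n^\ell x_k-i_k)$ on $\mathbb{R}^d$ for $\ell\in\mathbb{Z}_{\ge0}$, $\vec i\in\mathbb{Z}^d$, $Q$ the uniform B-spline of order $m$ with knots $0,\dots,m$; $\mathfrak{B}$ the set of all of them, $\ell_\varphi$ the level. $\mathcal{B}^0=\{\varphi^0_{\vec i}:\vec i\in[-p:0]^d\}$. Children $\mathrm{ch}(\varphi^\ell_{\vec i})=\{\varphi^{\ell+1}_{\vec k}:n\vec i\le\vec k\le n\vec i+sm\}$ (componentwise), extended to sets by union, $\mathrm{ch}^k$ its $k$-fold application; each $\varphi^\ell_{\vec i}$ is a linear combination with positive coefficients of its children. A lineage is a finite $\mathcal{L}\subset\mathfrak{B}$ with $\mathcal{L}\subset\mathcal{B}^0\cup\mathrm{ch}(\mathcal{L})$; its hierarchical generator is $\mathcal{H}=(\mathcal{B}^0\cup\mathrm{ch}(\mathcal{L}))\setminus\mathcal{L}$.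 For a set $\mathcal{F}\subset\mathfrak{B}$, $\mathcal{F}^\ell$ denotes its elements of level $\ell$. *)

theory Defs
  imports "HOL-Analysis.Analysis"
begin

text \<open>Uniform (cardinal) B-spline of order m with knots 0,...,m (valid for m \<ge> 2):
  Q(x) = 1/(m-1)! * sum_{j=0}^{m} (-1)^j binom(m,j) (x-j)_+^{m-1}.\<close>
definition Qspl :: "nat \<Rightarrow> real \<Rightarrow> real" where
  "Qspl m x = (\<Sum>j = 0..m. (-1) ^ j * real (m choose j) * (max 0 (x - real j)) ^ (m - 1))
              / fact (m - 1)"

text \<open>A B-spline is identified by its index (level l, translation vector i \<in> Z^d).
  The map from indices to functions is injective, so sets of B-splines are
  represented by sets of indices.\<close>
type_synonym 'd bidx = "nat \<times> (int ^ 'd)"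

definition bspl :: "nat \<Rightarrow> nat \<Rightarrow> 'd::finite bidx \<Rightarrow> real ^ 'd \<Rightarrow> real" where
  "bspl n m \<phi> x = (\<Prod>k\<in>UNIV. Qspl m (real n ^ fst \<phi> * x $ k - real_of_int (snd \<phi> $ k)))"

definition B0 :: "nat \<Rightarrow> 'd::finite bidx set" where
  "B0 m = {(0, i) | i. \<forall>k. - (int m - 1) \<le> i $ k \<and> i $ k \<le> 0}"

definition ch :: "nat \<Rightarrow> nat \<Rightarrow> 'd::finite bidx \<Rightarrow> 'd bidx set" where
  "ch n m \<phi> = {(fst \<phi> + 1, k) | k. \<forall>j. int n * snd \<phi> $ j \<le> k $ j
                  \<and> k $ j \<le> int n * snd \<phi> $ j + (int n - 1) * int m}"

definition chS :: "nat \<Rightarrow> nat \<Rightarrow> 'd::finite bidx set \<Rightarrow> 'd bidx set" where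
  "chS n m S = (\<Union>\<phi>\<in>S. ch n m \<phi>)"

definition chk :: "nat \<Rightarrow> nat \<Rightarrow> nat \<Rightarrow> 'd::finite bidx set \<Rightarrow> 'd bidx set" where
  "chk n m k S = ((chS n m) ^^ k) S"

definition desc :: "nat \<Rightarrow> nat \<Rightarrow> 'd::finite bidx \<Rightarrow> 'd bidx set" where
  "desc n m \<psi> = (\<Union>k\<in>{1..}. chk n m k {\<psi>})"

definition lineage :: "nat \<Rightarrow> nat \<Rightarrow> 'd::finite bidx set \<Rightarrow> bool" where
  "lineage n m L \<longleftrightarrow> finite L \<and> L \<subseteq> B0 m \<union> chS n m L"

definition hgen :: "nat \<Rightarrow> nat \<Rightarrow> 'd::finite bidx set \<Rightarrow> 'd bidx set" where
  "hgen n m L = (B0 m \<union> chS n m L) - L"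

definition lev :: "'d::finite bidx set \<Rightarrow> nat \<Rightarrow> 'd bidx set" where
  "lev F l = {\<phi> \<in> F. fst \<phi> = l}"

definition fspan :: "('a \<Rightarrow> real) set \<Rightarrow> ('a \<Rightarrow> real) set" where
  "fspan S = {f. \<exists>T c. finite T \<and> T \<subseteq> S \<and> f = (\<lambda>x. \<Sum>g\<in>T. c g * g x)}"

end

theory Submission
  imports Defs "HOL-Computational_Algebra.Polynomial" "HOL-Library.FuncSet"
begin


definition Lg :: "(nat \<Rightarrow> real) \<Rightarrow> real poly \<Rightarrow> real" where
  "Lg g p = (\<Sum>k\<le>degree p. coeff p k * g k)"

lemma Lg_bound: "degree p < N \<Longrightarrow> Lg g p = (\<Sum>k<N. coeff p k * g k)"
  unfolding Lg_def
  by (rule sum.mono_neutral_left) (auto simp: coeff_eq_0)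

lemma Lg_add: "Lg g (p + q) = Lg g p + Lg g q"
proof -
  define N where "N = Suc (max (degree p) (degree q))"
  have "degree (p+q) < N" unfolding N_def using degree_add_le_max[of p q] by linarith
  then show ?thesis
    using Lg_bound[of "p+q" N] Lg_bound[of p N] Lg_bound[of q N]
    by (simp add: N_def sum.distrib algebra_simps less_Suc_eq_le)
qed

lemma Lg_smult: "Lg g (smult a p) = a * Lg g p"
  using Lg_bound[of "smult a p" "Suc (degree p)" g] Lg_bound[of p "Suc (degree p)" g]
  by (simp add: sum_distrib_left mult.assoc degree_smult_le le_imp_less_Suc del: sum.lessThan_Suc)

lemma Lg_pCons: "Lg g (pCons a p) = a * g 0 + Lg (\<lambda>k. g (Suc k)) p"
proof -
  have "degree (pCons a p) < Suc (Suc (degree p))" by (simp add: degree_pCons_le le_imp_less_Suc)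
  then have "Lg g (pCons a p) = (\<Sum>k<Suc (Suc (degree p)). coeff (pCons a p) k * g k)" by (rule Lg_bound)
  also have "\<dots> = a * g 0 + (\<Sum>k<Suc (degree p). coeff p k * g (Suc k))"
    by (subst sum.lessThan_Suc_shift) simp
  also have "\<dots> = a * g 0 + Lg (\<lambda>k. g (Suc k)) p" by (subst Lg_bound[of p]) auto
  finally show ?thesis .
qed

lemma Lg_zero[simp]: "Lg g 0 = 0" by (simp add: Lg_def)

lemma Lg_mult: "Lg g (p * q) = Lg (\<lambda>j. Lg (\<lambda>i. g (i + j)) q) p"
proof (induction p arbitrary: g)
  case 0 then show ?case by simp
next
  case (pCons a p)
  have "Lg g (pCons a p * q) = a * Lg g q + Lg (\<lambda>k. g (Suc k)) (p * q)"
    by (simp add: Lg_add Lg_smult Lg_pCons)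
  also have "\<dots> = a * Lg g q + Lg (\<lambda>j. Lg (\<lambda>i. g (Suc (i + j))) q) p"
    using pCons.IH[of "\<lambda>k. g (Suc k)"] by simp
  also have "\<dots> = Lg (\<lambda>j. Lg (\<lambda>i. g (i + j)) q) (pCons a p)"
    by (simp add: Lg_pCons)
  finally show ?case .
qed

lemma Lg_monom: "Lg g (monom a k) = a * g k"
  using Lg_bound[of "monom a k" "Suc k" g] by (simp add: degree_monom_le le_imp_less_Suc coeff_monom if_distrib sum.delta cong: if_cong)

lemma Lg_sum: "Lg g (\<Sum>i\<in>I. f i) = (\<Sum>i\<in>I. Lg g (f i))"
  by (induction I rule: infinite_finite_induct) (auto simp: Lg_add)

lemma binom_poly: "(1 - monom (1::real) r) ^ m = (\<Sum>i\<le>m. monom ((-1)^i * real (m choose i)) (r * i))"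
proof -
  have "(1 - monom (1::real) r) ^ m = (monom (-1) r + 1) ^ m"
    by (simp add: monom_altdef algebra_simps)
  also have "\<dots> = (\<Sum>i\<le>m. of_nat (m choose i) * monom (-1) r ^ i * 1 ^ (m - i))"
    by (rule binomial_ring)
  also have "\<dots> = (\<Sum>i\<le>m. monom ((-1)^i * real (m choose i)) (r * i))"
    by (rule sum.cong) (auto simp: monom_power of_nat_poly smult_monom mult.commute)
  finally show ?thesis .
qed

lemma Lg_binom: "Lg g ((1 - monom 1 r) ^ m) = (\<Sum>i\<le>m. (-1)^i * real (m choose i) * g (r * i))"
  by (simp add: binom_poly Lg_sum Lg_monom)

definition Tf :: "nat \<Rightarrow> real \<Rightarrow> real" where "Tf m y = max 0 y ^ (m - 1)"

lemma Q_Tf: "Qspl m x = (\<Sum>j\<le>m. (-1)^j * real (m choose j) * Tf m (x - real j)) / fact (m - 1)"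
  by (simp add: Qspl_def Tf_def atLeast0AtMost)

lemma Tf_hom: "c > 0 \<Longrightarrow> Tf m (c * y) = c ^ (m - 1) * Tf m y"
proof -
  assume c: "c > 0"
  have "max 0 (c * y) = c * max 0 y" using c
    by (cases "y \<ge> 0") (simp_all add: max_def mult_pos_neg less_imp_le not_le)
  then show ?thesis by (simp add: Tf_def power_mult_distrib)
qed

definition Apol :: "nat \<Rightarrow> real poly" where "Apol n = (\<Sum>j<n. monom 1 j)"

lemma Apol_id: "1 - monom (1::real) n = (1 - monom 1 1) * Apol n"
  using one_diff_power_eq[of "monom (1::real) 1" n] by (simp add: Apol_def monom_power)

lemma deg_Apol: "degree (Apol n ^ m) \<le> (n - 1) * m"
proof -
  have "degree (Apol n) \<le> n - 1" unfolding Apol_def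
    by (rule degree_sum_le) (auto intro: order.trans[OF degree_monom_le])
  then show ?thesis using degree_power_le[of "Apol n" m] by (metis le_trans mult_le_mono1)
qed

definition acoef :: "nat \<Rightarrow> nat \<Rightarrow> nat \<Rightarrow> real" where
  "acoef n m j = coeff (Apol n ^ m) j / real n ^ (m - 1)"



lemma refine1: assumes n: "n \<ge> 1"
  shows "Qspl m x = (\<Sum>j\<le>(n - 1) * m. acoef n m j * Qspl m (real n * x - real j))"
proof -
  define g where "g k = Tf m (x - real k / real n)" for k
  define B where "B = (1 - monom (1::real) 1) ^ m"
  define h where "h j = Lg (\<lambda>i. g (i + j)) B" for j
  have npos: "real n > 0" using n by simp
  have gn: "g (n * i) = Tf m (x - real i)" for i
    using npos by (simp add: g_def)
  have "fact (m - 1) * Qspl m x = Lg g ((1 - monom 1 n) ^ m)"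
    using gn by (simp add: Lg_binom Q_Tf mult_ac)
  also have "\<dots> = Lg g (Apol n ^ m * B)"
    by (subst Apol_id) (simp only: B_def power_mult_distrib mult.commute)
  also have "\<dots> = Lg h (Apol n ^ m)" by (simp add: Lg_mult h_def[abs_def])
  finally have e1: "fact (m - 1) * Qspl m x = Lg h (Apol n ^ m)" .
  have hj: "h j = fact (m - 1) * Qspl m (real n * x - real j) / real n ^ (m - 1)" for j
  proof -
    have "real n ^ (m - 1) * h j = (\<Sum>i\<le>m. (-1)^i * real (m choose i) * (real n ^ (m - 1) * g (i + j)))"
      by (simp add: h_def B_def Lg_binom sum_distrib_left mult_ac)
    also have "\<dots> = (\<Sum>i\<le>m. (-1)^i * real (m choose i) * Tf m (real n * x - real j - real i))"
    proof (rule sum.cong[OF refl])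
      fix i
      have "real n * (x - real (i + j) / real n) = real n * x - real j - real i"
        using npos by (simp add: field_simps)
      then show "(-1)^i * real (m choose i) * (real n ^ (m - 1) * g (i + j)) = (-1)^i * real (m choose i) * Tf m (real n * x - real j - real i)"
        unfolding g_def using Tf_hom[OF npos, of m "x - real (i + j) / real n"] by simp
    qed
    also have "\<dots> = fact (m - 1) * Qspl m (real n * x - real j)" by (simp add: Q_Tf)
    finally show ?thesis using npos by (simp add: field_simps)
  qed
  have "Lg h (Apol n ^ m) = (\<Sum>j<Suc ((n - 1) * m). coeff (Apol n ^ m) j * h j)"
    by (rule Lg_bound) (use deg_Apol in \<open>simp add: le_imp_less_Suc\<close>)
  then have "fact (m - 1) * Qspl m x = (\<Sum>j\<le>(n - 1) * m. coeff (Apol n ^ m) j * h j)"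
    using e1 by (simp add: lessThan_Suc_atMost)
  also have "\<dots> = fact (m - 1) * (\<Sum>j\<le>(n - 1) * m. acoef n m j * Qspl m (real n * x - real j))"
    by (simp add: hj acoef_def sum_distrib_left mult_ac)
  finally show ?thesis by simp
qed




lemma fspan_zero: "(\<lambda>x. 0) \<in> fspan S"
  unfolding fspan_def by (rule CollectI, rule exI[of _ "{}"]) auto

lemma fspan_base: "f \<in> S \<Longrightarrow> f \<in> fspan S"
  unfolding fspan_def by (rule CollectI, rule exI[of _ "{f}"], rule exI[of _ "\<lambda>_. 1"]) auto

lemma fspan_mono: "S \<subseteq> S' \<Longrightarrow> fspan S \<subseteq> fspan S'"
  unfolding fspan_def by blast

lemma fspan_lin: assumes "f \<in> fspan S" "g \<in> fspan S" shows "(\<lambda>x. a * f x + g x) \<in> fspan S"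
proof -
  obtain T1 c1 where 1: "finite T1" "T1 \<subseteq> S" "f = (\<lambda>x. \<Sum>h\<in>T1. c1 h * h x)"
    using assms(1) unfolding fspan_def by blast
  obtain T2 c2 where 2: "finite T2" "T2 \<subseteq> S" "g = (\<lambda>x. \<Sum>h\<in>T2. c2 h * h x)"
    using assms(2) unfolding fspan_def by blast
  define c where "c h = a * (if h \<in> T1 then c1 h else 0) + (if h \<in> T2 then c2 h else 0)" for h
  have "(\<lambda>x. a * f x + g x) = (\<lambda>x. \<Sum>h\<in>T1 \<union> T2. c h * h x)"
  proof
    fix x
    have "(\<Sum>h\<in>T1 \<union> T2. c h * h x) = a * (\<Sum>h\<in>T1 \<union> T2. if h \<in> T1 then c1 h * h x else 0)
       + (\<Sum>h\<in>T1 \<union> T2. if h \<in> T2 then c2 h * h x else 0)"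
      unfolding c_def sum_distrib_left sum.distrib[symmetric]
      by (rule sum.cong) (auto simp: algebra_simps)
    also have "\<dots> = a * f x + g x"
      using 1 2 sum.inter_restrict[of "T1 \<union> T2" "\<lambda>h. c1 h * h x" T1]
        sum.inter_restrict[of "T1 \<union> T2" "\<lambda>h. c2 h * h x" T2]
      by (simp add: Int_absorb1 Int_absorb2 Un_Int_eq)
    finally show "a * f x + g x = (\<Sum>h\<in>T1 \<union> T2. c h * h x)" by simp
  qed
  then show ?thesis unfolding fspan_def using 1 2 by blast
qed

lemma fspan_sum: "finite I \<Longrightarrow> (\<And>i. i \<in> I \<Longrightarrow> f i \<in> fspan S) \<Longrightarrow> (\<lambda>x. \<Sum>i\<in>I. a i * f i x) \<in> fspan S"
proof (induction I rule: finite_induct)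
  case empty then show ?case using fspan_zero by simp
next
  case (insert i I)
  then show ?case using fspan_lin[of "f i" S "\<lambda>x. \<Sum>i\<in>I. a i * f i x" "a i"] by simp
qed




lemma refine_span:
  assumes n: "n \<ge> 1" and ch: "\<And>c. c \<in> ch n m \<psi> \<Longrightarrow> bspl n m c \<in> fspan S"
  shows "bspl n m (\<psi> :: 'd::finite bidx) \<in> fspan S"
proof -
  obtain l i where psi: "\<psi> = (l, i)" by (cases \<psi>)
  define N where "N = (n - 1) * m"
  define P where "P = PiE (UNIV::'d set) (\<lambda>_. {..N})"
  define cp where "cp p = (Suc l, \<chi> k. int n * i $ k + int (p k))" for p :: "'d \<Rightarrow> nat"
  have eq: "bspl n m \<psi> = (\<lambda>x. \<Sum>p\<in>P. (\<Prod>k\<in>UNIV. acoef n m (p k)) * bspl n m (cp p) x)"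
  proof
    fix x :: "real ^ 'd"
    have "bspl n m \<psi> x = (\<Prod>k\<in>UNIV. \<Sum>j\<le>N. acoef n m j * Qspl m (real n * (real n ^ l * x $ k - real_of_int (i $ k)) - real j))"
      unfolding psi bspl_def N_def
      by (rule prod.cong[OF refl], subst refine1[OF n]) (simp add: algebra_simps)
    also have "\<dots> = (\<Sum>p\<in>P. \<Prod>k\<in>UNIV. acoef n m (p k) * Qspl m (real n * (real n ^ l * x $ k - real_of_int (i $ k)) - real (p k)))"
      unfolding P_def by (rule prod_sum_PiE) auto
    also have "\<dots> = (\<Sum>p\<in>P. (\<Prod>k\<in>UNIV. acoef n m (p k)) * bspl n m (cp p) x)"
    proof (rule sum.cong[OF refl])
      fix p
      have "(\<Prod>k\<in>UNIV. Qspl m (real n * (real n ^ l * x $ k - real_of_int (i $ k)) - real (p k)))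
          = bspl n m (cp p) x"
        unfolding bspl_def cp_def by (rule prod.cong) (simp_all add: algebra_simps)
      then show "(\<Prod>k\<in>UNIV. acoef n m (p k) * Qspl m (real n * (real n ^ l * x $ k - real_of_int (i $ k)) - real (p k)))
          = (\<Prod>k\<in>UNIV. acoef n m (p k)) * bspl n m (cp p) x"
        by (simp add: prod.distrib)
    qed
    finally show "bspl n m \<psi> x = (\<Sum>p\<in>P. (\<Prod>k\<in>UNIV. acoef n m (p k)) * bspl n m (cp p) x)" .
  qed
  have "cp p \<in> ch n m \<psi>" if "p \<in> P" for p
  proof -
    have pk: "p k \<le> N" for k using that unfolding P_def by auto
    have "int (p k) \<le> (int n - 1) * int m" for k
    proof -
      have "int (p k) \<le> int N" using pk[of k] by simp
      moreover have "int N = (int n - 1) * int m" using n unfolding N_def by (simp add: of_nat_diff)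
      ultimately show ?thesis by simp
    qed
    then show ?thesis unfolding ch_def cp_def psi by auto
  qed
  then have "bspl n m (cp p) \<in> fspan S" if "p \<in> P" for p using ch that by blast
  moreover have "finite P" unfolding P_def by (rule finite_PiE) auto
  ultimately show ?thesis unfolding eq by (rule fspan_sum[rotated])
qed




lemma ch_fst: "c \<in> ch n m \<psi> \<Longrightarrow> fst c = Suc (fst \<psi>)"
  unfolding ch_def by auto

lemma B0_fst: "c \<in> B0 m \<Longrightarrow> fst c = 0"
  unfolding B0_def by auto

lemma chS_mono: "S \<subseteq> S' \<Longrightarrow> chS n m S \<subseteq> chS n m S'"
  unfolding chS_def by blast

lemma chk_Suc: "chk n m (Suc k) S = chS n m (chk n m k S)"
  unfolding chk_def by simp

lemma chk_Suc_right: "chk n m (Suc k) S = chk n m k (chS n m S)"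
  unfolding chk_def by (simp add: funpow_Suc_right del: funpow.simps)

lemma chk_0: "chk n m 0 S = S" unfolding chk_def by simp

lemma chk_1: "chk n m (Suc 0) S = chS n m S" unfolding chk_def by simp

lemma chk_mono: "S \<subseteq> S' \<Longrightarrow> chk n m k S \<subseteq> chk n m k S'"
  by (induction k) (simp_all add: chk_Suc chk_0 chS_mono)

lemma chS_single: "chS n m {\<psi>} = ch n m \<psi>"
  unfolding chS_def by simp

lemma ch_desc: "c \<in> ch n m \<psi> \<Longrightarrow> c \<in> desc n m \<psi>"
  unfolding desc_def using chk_1[of n m "{\<psi>}"] chS_single[of n m \<psi>]
  by (intro UN_I[of 1]) auto

lemma desc_mono: assumes "c \<in> ch n m \<psi>" shows "desc n m c \<subseteq> desc n m \<psi>"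
proof
  fix x assume "x \<in> desc n m c"
  then obtain k where k: "k \<ge> 1" "x \<in> chk n m k {c}" unfolding desc_def by auto
  have "chk n m k {c} \<subseteq> chk n m k (chS n m {\<psi>})"
    using assms by (intro chk_mono) (simp add: chS_single)
  then have "x \<in> chk n m (Suc k) {\<psi>}" using k unfolding chk_Suc_right by blast
  then show "x \<in> desc n m \<psi>" unfolding desc_def by auto
qed

lemma lev_step:
  assumes L: "lineage n m L"
  shows "\<phi> \<in> B0 m \<union> chS n m L \<Longrightarrow> fst \<phi> = l + Suc k \<Longrightarrow> \<phi> \<in> chk n m (Suc k) (lev L l)"
proof (induction k arbitrary: \<phi>)
  case 0
  have "\<phi> \<notin> B0 m" using 0(2) B0_fst[of \<phi> m] by auto
  then have "\<phi> \<in> chS n m L" using 0(1) by blast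
  then obtain \<psi> where psi: "\<psi> \<in> L" "\<phi> \<in> ch n m \<psi>" unfolding chS_def by blast
  have "fst \<psi> = l" using ch_fst[OF psi(2)] 0(2) by simp
  then have "\<psi> \<in> lev L l" using psi(1) unfolding lev_def by blast
  then have "\<phi> \<in> chS n m (lev L l)" using psi(2) unfolding chS_def by blast
  then show ?case by (simp only: chk_1)
next
  case (Suc k)
  have "\<phi> \<notin> B0 m" using Suc(3) B0_fst[of \<phi> m] by auto
  then have "\<phi> \<in> chS n m L" using Suc(2) by blast
  then obtain \<psi> where psi: "\<psi> \<in> L" "\<phi> \<in> ch n m \<psi>" unfolding chS_def by blast
  have f: "fst \<psi> = l + Suc k" using ch_fst[OF psi(2)] Suc(3) by simp
  have "\<psi> \<in> B0 m \<union> chS n m L" using psi(1) L unfolding lineage_def by blast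
  then have "\<psi> \<in> chk n m (Suc k) (lev L l)" using Suc.IH f by blast
  then have "\<phi> \<in> chS n m (chk n m (Suc k) (lev L l))" using psi(2) unfolding chS_def by blast
  then show ?case by (simp only: chk_Suc[of n m "Suc k"])
qed

theorem lemma4p5:
  fixes n m :: nat and L :: "'d::finite bidx set"
  assumes "n \<ge> 2" and "m \<ge> 2" and "lineage n m L"
  shows "(\<forall>\<psi>\<in>L. bspl n m \<psi> \<in> fspan (bspl n m ` (hgen n m L \<inter> desc n m \<psi>)))
       \<and> (\<forall>l k. k \<ge> 1 \<longrightarrow> lev (hgen n m L) (l + k) \<subseteq> chk n m k (lev L l))"
proof
  have n1: "n \<ge> 1" using assms by simp
  have finL: "finite L" and sub: "L \<subseteq> B0 m \<union> chS n m L" using assms(3) unfolding lineage_def by auto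
  define M where "M = Max (fst ` L)"
  have le: "fst \<psi> \<le> M" if "\<psi> \<in> L" for \<psi> unfolding M_def using finL that by simp
  have main: "\<forall>\<psi>\<in>L. M - fst \<psi> = t \<longrightarrow> bspl n m \<psi> \<in> fspan (bspl n m ` (hgen n m L \<inter> desc n m \<psi>))" for t
  proof (induction t rule: less_induct)
    case (less t)
    show ?case
    proof (intro ballI impI)
      fix \<psi> assume psi: "\<psi> \<in> L" "M - fst \<psi> = t"
      show "bspl n m \<psi> \<in> fspan (bspl n m ` (hgen n m L \<inter> desc n m \<psi>))"
      proof (rule refine_span[OF n1])
        fix c assume c: "c \<in> ch n m \<psi>"
        have cS: "c \<in> chS n m L" using c psi unfolding chS_def by auto
        show "bspl n m c \<in> fspan (bspl n m ` (hgen n m L \<inter> desc n m \<psi>))"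
        proof (cases "c \<in> L")
          case True
          have "fst c = Suc (fst \<psi>)" using ch_fst c .
          then have "M - fst c < t" using le[OF True] psi by simp
          then have "bspl n m c \<in> fspan (bspl n m ` (hgen n m L \<inter> desc n m c))"
            using less.IH True by blast
          moreover have "fspan (bspl n m ` (hgen n m L \<inter> desc n m c)) \<subseteq> fspan (bspl n m ` (hgen n m L \<inter> desc n m \<psi>))"
            by (rule fspan_mono) (use desc_mono[OF c] in blast)
          ultimately show ?thesis by blast
        next
          case False
          then have "c \<in> hgen n m L \<inter> desc n m \<psi>" using cS ch_desc[OF c] unfolding hgen_def by auto
          then show ?thesis by (intro fspan_base) auto
        qed
      qed
    qed
  qed
  then show "\<forall>\<psi>\<in>L. bspl n m \<psi> \<in> fspan (bspl n m ` (hgen n m L \<inter> desc n m \<psi>))" by blast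
next
  show "\<forall>l k. k \<ge> 1 \<longrightarrow> lev (hgen n m L) (l + k) \<subseteq> chk n m k (lev L l)"
  proof (intro allI impI subsetI)
    fix l k \<phi> assume k: "k \<ge> 1" and phi: "\<phi> \<in> lev (hgen n m L) (l + k)"
    obtain k' where k': "k = Suc k'" using k by (cases k) auto
    have "\<phi> \<in> B0 m \<union> chS n m L" "fst \<phi> = l + Suc k'" using phi k' unfolding lev_def hgen_def by auto
    then show "\<phi> \<in> chk n m k (lev L l)" using lev_step[OF assms(3)] k' by blast
  qed
qed


end
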